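(* Let $X\subseteq\mathbb{R}^n$ be an $\ell_1$-convex set and $\lambda>0$. Then the set \[ X_\lambda=\bigcup\{\lambda(h+Q_n): h\in\mathbf{H}^n,\ \lambda(h+Q_n)\cap X\neq\emptyset\} \] is $\ell_1$-convex.
   Context: $Q_n=[-\tfrac12,\tfrac12]^n$ and $\mathbf{H}=\{m+\tfrac12: m\in\mathbb{Z}\}$ is the set of half-integers. A subset $Z\subseteq\mathbb{R}^n$ is $\ell_1$-convex if for all $z,z'\in Z$, with $D=\sum_i|z_i-z'_i|$, there is $\gamma\colon[0,D]\to Z$ with $\gamma(0)=z,\gamma(D)=z'$ and $\sum_i|\gamma_i(t)-\gamma_i(t')|=|t-t'|$ for all $t,t'$. *)

theory Defs
  imports "HOL-Analysis.Analysis"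
begin

definition l1dist :: "real^'n \<Rightarrow> real^'n \<Rightarrow> real" where
  "l1dist x y = (\<Sum>i\<in>UNIV. \<bar>x $ i - y $ i\<bar>)"

definition l1_convex :: "(real^'n) set \<Rightarrow> bool" where
  "l1_convex Z \<longleftrightarrow> (\<forall>z\<in>Z. \<forall>z'\<in>Z. \<exists>\<gamma> :: real \<Rightarrow> real^'n.
      \<gamma> 0 = z \<and> \<gamma> (l1dist z z') = z' \<and>
      (\<forall>t\<in>{0..l1dist z z'}. \<gamma> t \<in> Z) \<and>
      (\<forall>t\<in>{0..l1dist z z'}. \<forall>t'\<in>{0..l1dist z z'}. l1dist (\<gamma> t) (\<gamma> t') = \<bar>t - t'\<bar>))"

definition half_integers :: "real set" where
  "half_integers = {of_int m + 1/2 | m. True}"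

definition unit_cube :: "(real^'n) set" where
  "unit_cube = {q. \<forall>i. -1/2 \<le> q $ i \<and> q $ i \<le> 1/2}"

definition scaled_cube :: "real \<Rightarrow> real^'n \<Rightarrow> (real^'n) set" where
  "scaled_cube c h = (\<lambda>q. c *\<^sub>R (h + q)) ` unit_cube"

definition cube_thickening :: "real \<Rightarrow> (real^'n) set \<Rightarrow> (real^'n) set" where
  "cube_thickening lam X = \<Union>{scaled_cube lam h | h. (\<forall>i. h $ i \<in> half_integers) \<and> scaled_cube lam h \<inter> X \<noteq> {}}"

end

theory Submission
  imports Defs
begin

definition btw :: "real^'n \<Rightarrow> real^'n \<Rightarrow> real^'n \<Rightarrow> bool" where
  "btw a b c \<longleftrightarrow> (\<forall>i. (a$i \<le> b$i \<and> b$i \<le> c$i) \<or> (c$i \<le> b$i \<and> b$i \<le> a$i))"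

definition geo :: "(real^'n) set \<Rightarrow> (real \<Rightarrow> real^'n) \<Rightarrow> real^'n \<Rightarrow> real^'n \<Rightarrow> bool" where
  "geo Z g a b \<longleftrightarrow> g 0 = a \<and> g (l1dist a b) = b \<and> (\<forall>t\<in>{0..l1dist a b}. g t \<in> Z) \<and>
     (\<forall>t\<in>{0..l1dist a b}. \<forall>t'\<in>{0..l1dist a b}. l1dist (g t) (g t') = \<bar>t - t'\<bar>)"

lemma l1_convex_geo: "l1_convex Z \<longleftrightarrow> (\<forall>z\<in>Z. \<forall>z'\<in>Z. \<exists>g. geo Z g z z')"
  unfolding l1_convex_def geo_def by blast

lemma l1dist_nonneg: "0 \<le> l1dist x y"
  unfolding l1dist_def by (simp add: sum_nonneg)

lemma l1dist_sym: "l1dist x y = l1dist y x"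
  unfolding l1dist_def by (simp add: abs_minus_commute)

lemma l1dist_self [simp]: "l1dist x x = 0"
  unfolding l1dist_def by simp

lemma l1dist_zero: "l1dist x y = 0 \<Longrightarrow> x = y"
proof -
  assume "l1dist x y = 0"
  hence "\<forall>i\<in>UNIV. \<bar>x$i - y$i\<bar> = 0"
    unfolding l1dist_def by (subst (asm) sum_nonneg_eq_0_iff) auto
  thus "x = y" by (simp add: vec_eq_iff)
qed

lemma btw_l1dist: assumes "btw a b c" shows "l1dist a c = l1dist a b + l1dist b c"
proof -
  have "\<bar>a$i - c$i\<bar> = \<bar>a$i - b$i\<bar> + \<bar>b$i - c$i\<bar>" for i
  proof -
    from assms have "(a$i \<le> b$i \<and> b$i \<le> c$i) \<or> (c$i \<le> b$i \<and> b$i \<le> a$i)"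
      unfolding btw_def by blast
    thus ?thesis by auto
  qed
  thus ?thesis unfolding l1dist_def by (simp add: sum.distrib)
qed

lemma l1dist_btw: assumes "l1dist a c = l1dist a b + l1dist b c" shows "btw a b c"
proof -
  have "(\<Sum>i\<in>UNIV. \<bar>a$i - b$i\<bar> + \<bar>b$i - c$i\<bar> - \<bar>a$i - c$i\<bar>) = 0"
    using assms unfolding l1dist_def by (simp add: sum.distrib sum_subtractf)
  hence "\<forall>i\<in>UNIV. \<bar>a$i - b$i\<bar> + \<bar>b$i - c$i\<bar> - \<bar>a$i - c$i\<bar> = 0"
    by (subst (asm) sum_nonneg_eq_0_iff) auto
  thus ?thesis unfolding btw_def
  proof (intro allI)
    fix i assume "\<forall>i\<in>UNIV. \<bar>a$i - b$i\<bar> + \<bar>b$i - c$i\<bar> - \<bar>a$i - c$i\<bar> = 0"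
    hence "\<bar>a$i - b$i\<bar> + \<bar>b$i - c$i\<bar> - \<bar>a$i - c$i\<bar> = 0" by blast
    thus "(a$i \<le> b$i \<and> b$i \<le> c$i) \<or> (c$i \<le> b$i \<and> b$i \<le> a$i)" by linarith
  qed
qed

lemma btw_chain: assumes "btw a g b" "btw b q c" "btw a b c" shows "btw g b q"
  unfolding btw_def
proof
  fix i
  have "(a$i \<le> g$i \<and> g$i \<le> b$i) \<or> (b$i \<le> g$i \<and> g$i \<le> a$i)"
       "(b$i \<le> q$i \<and> q$i \<le> c$i) \<or> (c$i \<le> q$i \<and> q$i \<le> b$i)"
       "(a$i \<le> b$i \<and> b$i \<le> c$i) \<or> (c$i \<le> b$i \<and> b$i \<le> a$i)"
    using assms unfolding btw_def by blast+
  thus "(g$i \<le> b$i \<and> b$i \<le> q$i) \<or> (q$i \<le> b$i \<and> b$i \<le> g$i)" by linarith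
qed

lemma geo_btw:
  assumes "geo Z g a b" "0 \<le> t" "t \<le> t'" "t' \<le> l1dist a b"
  shows "btw (g t) (g t') b"
proof -
  let ?d = "l1dist a b"
  have b: "g ?d = b" and D: "\<forall>t\<in>{0..?d}. \<forall>t'\<in>{0..?d}. l1dist (g t) (g t') = \<bar>t - t'\<bar>"
    using assms(1) unfolding geo_def by auto
  have "l1dist (g t) b = ?d - t" using D[rule_format, of t ?d] b assms by auto
  moreover have "l1dist (g t') b = ?d - t'" using D[rule_format, of t' ?d] b assms by auto
  moreover have "l1dist (g t) (g t') = t' - t" using D[rule_format, of t t'] assms by auto
  ultimately show ?thesis by (intro l1dist_btw) simp
qed

lemma geo_concat:
  assumes g1: "geo Z g1 a b" and g2: "geo Z g2 b c" and abc: "btw a b c"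
  shows "\<exists>g. geo Z g a c"
proof -
  define d1 where "d1 = l1dist a b"
  define d2 where "d2 = l1dist b c"
  have dd: "l1dist a c = d1 + d2" using btw_l1dist[OF abc] d1_def d2_def by simp
  have d1: "0 \<le> d1" and d2: "0 \<le> d2" using l1dist_nonneg d1_def d2_def by auto
  have G1: "g1 0 = a" "g1 d1 = b" "\<And>t. t\<in>{0..d1} \<Longrightarrow> g1 t \<in> Z"
    "\<And>t t'. t\<in>{0..d1} \<Longrightarrow> t'\<in>{0..d1} \<Longrightarrow> l1dist (g1 t) (g1 t') = \<bar>t - t'\<bar>"
    using g1 unfolding geo_def d1_def by auto
  have G2: "g2 0 = b" "g2 d2 = c" "\<And>t. t\<in>{0..d2} \<Longrightarrow> g2 t \<in> Z"
    "\<And>t t'. t\<in>{0..d2} \<Longrightarrow> t'\<in>{0..d2} \<Longrightarrow> l1dist (g2 t) (g2 t') = \<bar>t - t'\<bar>"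
    using g2 unfolding geo_def d2_def by auto
  define g where "g t = (if t \<le> d1 then g1 t else g2 (t - d1))" for t
  have mixed: "l1dist (g1 t) (g2 s) = (d1 - t) + s" if "0 \<le> t" "t \<le> d1" "0 \<le> s" "s \<le> d2" for t s
  proof -
    have "btw (g1 t) (g1 d1) b" using geo_btw[OF g1, of t d1] that d1_def by auto
    hence 1: "btw a (g1 t) b"
      using geo_btw[OF g1, of 0 t] that d1_def G1(1) by auto
    have 2: "btw b (g2 s) c" using geo_btw[OF g2, of 0 s] that d2_def G2(1) by auto
    have "btw (g1 t) b (g2 s)" using btw_chain[OF 1 2 abc] .
    hence "l1dist (g1 t) (g2 s) = l1dist (g1 t) b + l1dist b (g2 s)" by (rule btw_l1dist)
    also have "l1dist (g1 t) b = d1 - t" using G1(4)[of t d1] G1(2) that by auto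
    also have "l1dist b (g2 s) = s" using G2(4)[of 0 s] G2(1) that by auto
    finally show ?thesis .
  qed
  have "geo Z g a c"
    unfolding geo_def dd
  proof (intro conjI ballI)
    show "g 0 = a" using d1 G1 by (simp add: g_def)
    show "g (d1 + d2) = c"
    proof (cases "d2 = 0")
      case True
      hence "b = c" using l1dist_zero[of b c] d2_def by simp
      thus ?thesis using True G1 by (simp add: g_def)
    next
      case False thus ?thesis using d2 G2 by (simp add: g_def)
    qed
    fix t assume t: "t \<in> {0..d1+d2}"
    show "g t \<in> Z" using t G1(3) G2(3) by (auto simp: g_def)
    fix t' assume t': "t' \<in> {0..d1+d2}"
    show "l1dist (g t) (g t') = \<bar>t - t'\<bar>"
    proof (cases "t \<le> d1"; cases "t' \<le> d1")
      assume "t \<le> d1" "t' \<le> d1" thus ?thesis using t t' G1(4) by (simp add: g_def)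
    next
      assume "\<not> t \<le> d1" "\<not> t' \<le> d1" thus ?thesis using t t' G2(4)[of "t - d1" "t' - d1"] by (simp add: g_def)
    next
      assume "t \<le> d1" "\<not> t' \<le> d1" thus ?thesis using t t' mixed[of t "t' - d1"] by (simp add: g_def)
    next
      assume "\<not> t \<le> d1" "t' \<le> d1" thus ?thesis using t t' mixed[of t' "t - d1"]
        by (simp add: g_def l1dist_sym[of "g2 _"])
    qed
  qed
  thus ?thesis by blast
qed

lemma geo_segment:
  assumes S: "convex S" and a: "a \<in> S" and b: "b \<in> S"
  shows "\<exists>g. geo S g a b"
proof -
  define d where "d = l1dist a b"
  define g where "g t = (1 - t/d) *\<^sub>R a + (t/d) *\<^sub>R b" for t
  have d0: "0 \<le> d" using l1dist_nonneg d_def by simp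
  have "geo S g a b" unfolding geo_def d_def[symmetric]
  proof (intro conjI ballI)
    show "g 0 = a" by (simp add: g_def)
    show "g d = b"
    proof (cases "d = 0")
      case True hence "a = b" using l1dist_zero[of a b] d_def by simp
      thus ?thesis by (simp add: g_def)
    qed (simp add: g_def)
    fix t assume t: "t \<in> {0..d}"
    show "g t \<in> S" unfolding g_def
      using t d0 by (intro convexD[OF S a b]) (auto simp: divide_le_eq_1)
    fix t' assume t': "t' \<in> {0..d}"
    show "l1dist (g t) (g t') = \<bar>t - t'\<bar>"
    proof (cases "d = 0")
      case True thus ?thesis using t t' by (simp add: g_def)
    next
      case False
      have "l1dist (g t) (g t') = (\<Sum>i\<in>UNIV. (\<bar>t - t'\<bar> / d) * \<bar>a$i - b$i\<bar>)"
        unfolding l1dist_def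
      proof (rule sum.cong[OF refl])
        fix i
        have "g t $ i - g t' $ i = ((t - t')/d) * (b$i - a$i)"
          by (simp add: g_def algebra_simps diff_divide_distrib)
        thus "\<bar>g t $ i - g t' $ i\<bar> = (\<bar>t - t'\<bar> / d) * \<bar>a$i - b$i\<bar>"
          using d0 by (simp add: abs_mult abs_minus_commute)
      qed
      also have "\<dots> = (\<bar>t - t'\<bar> / d) * d" unfolding sum_distrib_left[symmetric] l1dist_def d_def ..
      finally show ?thesis using False by simp
    qed
  qed
  thus ?thesis by blast
qed

lemma geo_reparam:
  fixes p :: "real \<Rightarrow> real^'n"
  assumes T: "0 \<le> T" and inZ: "\<forall>t\<in>{0..T}. p t \<in> Z"
    and lip: "\<forall>t\<in>{0..T}. \<forall>t'\<in>{0..T}. l1dist (p t) (p t') \<le> \<bar>t - t'\<bar>"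
    and mono: "\<forall>i. (\<forall>t t'. 0 \<le> t \<longrightarrow> t \<le> t' \<longrightarrow> t' \<le> T \<longrightarrow> p t $ i \<le> p t' $ i) \<or>
                   (\<forall>t t'. 0 \<le> t \<longrightarrow> t \<le> t' \<longrightarrow> t' \<le> T \<longrightarrow> p t' $ i \<le> p t $ i)"
  shows "\<exists>g. geo Z g (p 0) (p T)"
proof -
  define \<psi> where "\<psi> t = l1dist (p 0) (p t)" for t
  have btw1: "btw (p 0) (p t) (p t')" if "0 \<le> t" "t \<le> t'" "t' \<le> T" for t t'
    unfolding btw_def
  proof
    fix i
    from mono have "(\<forall>t t'. 0 \<le> t \<longrightarrow> t \<le> t' \<longrightarrow> t' \<le> T \<longrightarrow> p t $ i \<le> p t' $ i) \<or>
                   (\<forall>t t'. 0 \<le> t \<longrightarrow> t \<le> t' \<longrightarrow> t' \<le> T \<longrightarrow> p t' $ i \<le> p t $ i)" by blast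
    thus "(p 0 $ i \<le> p t $ i \<and> p t $ i \<le> p t' $ i) \<or> (p t' $ i \<le> p t $ i \<and> p t $ i \<le> p 0 $ i)"
    proof
      assume h: "\<forall>t t'. 0 \<le> t \<longrightarrow> t \<le> t' \<longrightarrow> t' \<le> T \<longrightarrow> p t $ i \<le> p t' $ i"
      have "p 0 $ i \<le> p t $ i" using h[rule_format, of 0 t] that by simp
      moreover have "p t $ i \<le> p t' $ i" using h[rule_format, of t t'] that by simp
      ultimately show ?thesis by simp
    next
      assume h: "\<forall>t t'. 0 \<le> t \<longrightarrow> t \<le> t' \<longrightarrow> t' \<le> T \<longrightarrow> p t' $ i \<le> p t $ i"
      have "p t $ i \<le> p 0 $ i" using h[rule_format, of 0 t] that by simp
      moreover have "p t' $ i \<le> p t $ i" using h[rule_format, of t t'] that by simp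
      ultimately show ?thesis by simp
    qed
  qed
  have add: "l1dist (p t) (p t') = \<psi> t' - \<psi> t" if "0 \<le> t" "t \<le> t'" "t' \<le> T" for t t'
    using btw_l1dist[OF btw1[OF that]] by (simp add: \<psi>_def)
  have absd: "l1dist (p t) (p t') = \<bar>\<psi> t - \<psi> t'\<bar>" if "t \<in> {0..T}" "t' \<in> {0..T}" for t t'
  proof (cases "t \<le> t'")
    case True
    thus ?thesis using add[of t t'] that l1dist_nonneg[of "p t" "p t'"] by auto
  next
    case False
    thus ?thesis using add[of t' t] that l1dist_nonneg[of "p t'" "p t"] l1dist_sym[of "p t" "p t'"] by auto
  qed
  have "1-lipschitz_on {0..T} \<psi>"
  proof (rule lipschitz_onI)
    fix t t' assume "t \<in> {0..T}" "t' \<in> {0..T}"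
    thus "dist (\<psi> t) (\<psi> t') \<le> 1 * dist t t'"
    proof -
      have "l1dist (p t) (p t') \<le> \<bar>t - t'\<bar>" using lip \<open>t \<in> {0..T}\<close> \<open>t' \<in> {0..T}\<close> by blast
      thus ?thesis using absd[OF \<open>t \<in> {0..T}\<close> \<open>t' \<in> {0..T}\<close>] by (simp add: dist_real_def)
    qed
  qed simp
  hence cont: "continuous_on {0..T} \<psi>" by (rule lipschitz_on_continuous_on)
  define D where "D = l1dist (p 0) (p T)"
  have psi0: "\<psi> 0 = 0" by (simp add: \<psi>_def)
  have psiT: "\<psi> T = D" by (simp add: \<psi>_def D_def)
  have surj: "\<exists>t. 0 \<le> t \<and> t \<le> T \<and> \<psi> t = s" if "s \<in> {0..D}" for s
    using IVT'[of \<psi> 0 s T, OF _ _ T cont] psi0 psiT that by auto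
  define \<tau> where "\<tau> s = (SOME t. 0 \<le> t \<and> t \<le> T \<and> \<psi> t = s)" for s
  have tau: "0 \<le> \<tau> s \<and> \<tau> s \<le> T \<and> \<psi> (\<tau> s) = s" if "s \<in> {0..D}" for s
    unfolding \<tau>_def by (rule someI_ex[OF surj[OF that]])
  define g where "g s = p (\<tau> s)" for s
  have D0: "0 \<le> D" using l1dist_nonneg D_def by simp
  have "geo Z g (p 0) (p T)" unfolding geo_def D_def[symmetric]
  proof (intro conjI ballI)
    have "l1dist (p 0) (p (\<tau> 0)) = 0" using tau[of 0] D0 by (simp add: \<psi>_def)
    thus "g 0 = p 0" unfolding g_def using l1dist_zero[of "p 0" "p (\<tau> 0)"] by simp
    have "l1dist (p (\<tau> D)) (p T) = 0" using tau[of D] D0 absd[of "\<tau> D" T] T psiT by simp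
    thus "g D = p T" unfolding g_def using l1dist_zero[of "p (\<tau> D)" "p T"] by simp
    fix s assume s: "s \<in> {0..D}"
    show "g s \<in> Z" unfolding g_def using tau[OF s] inZ by auto
    fix s' assume s': "s' \<in> {0..D}"
    show "l1dist (g s) (g s') = \<bar>s - s'\<bar>" unfolding g_def
      using absd[of "\<tau> s" "\<tau> s'"] tau[OF s] tau[OF s'] by simp
  qed
  thus ?thesis by blast
qed

definition incell :: "real \<Rightarrow> int \<Rightarrow> real \<Rightarrow> bool" where
  "incell lam k u \<longleftrightarrow> lam * of_int k \<le> u \<and> u \<le> lam * (of_int k + 1)"

definition clampc :: "real \<Rightarrow> real \<Rightarrow> real \<Rightarrow> real \<Rightarrow> real \<Rightarrow> real" where
  "clampc za zb xa xb y = (if (xb - xa) * (zb - za) < 0 then za else max (min za zb) (min (max za zb) y))"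

lemma int_le_from_lam:
  fixes lam :: real
  assumes "lam > 0" "lam * of_int a < lam * (of_int b + 1)" shows "a \<le> b"
proof -
  have "of_int a < (of_int b + 1 :: real)" using assms(2) mult_less_cancel_left_pos[OF assms(1)] by simp
  thus ?thesis by linarith
qed

lemma inversion_same:
  assumes lam: "lam > 0" and c: "incell lam ka xa" "incell lam ka za" "incell lam kb xb" "incell lam kb zb"
    and inv: "(xb - xa) * (zb - za) < 0"
  shows "ka = kb"
proof -
  from inv have "(xb < xa \<and> za < zb) \<or> (xa < xb \<and> zb < za)"
    by (metis diff_gt_0_iff_gt diff_less_0_iff_less mult_less_0_iff)
  thus ?thesis
  proof
    assume h: "xb < xa \<and> za < zb"
    have "kb \<le> ka" using c h by (intro int_le_from_lam[OF lam]) (auto simp: incell_def)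
    moreover have "ka \<le> kb" using c h by (intro int_le_from_lam[OF lam]) (auto simp: incell_def)
    ultimately show ?thesis by simp
  next
    assume h: "xa < xb \<and> zb < za"
    have "kb \<le> ka" using c h by (intro int_le_from_lam[OF lam]) (auto simp: incell_def)
    moreover have "ka \<le> kb" using c h by (intro int_le_from_lam[OF lam]) (auto simp: incell_def)
    ultimately show ?thesis by simp
  qed
qed

lemma clampc_cell:
  assumes lam: "lam > 0" and c: "incell lam ka xa" "incell lam ka za" "incell lam kb xb" "incell lam kb zb"
    and y: "min xa xb \<le> y" "y \<le> max xa xb"
  shows "\<exists>k. incell lam k y \<and> incell lam k (clampc za zb xa xb y)"
proof (cases "(xb - xa) * (zb - za) < 0")
  case True
  hence "ka = kb" using inversion_same[OF lam c] by simp
  hence "incell lam ka y" using c y by (auto simp: incell_def)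
  thus ?thesis using True c by (auto simp: clampc_def)
next
  case False
  hence cl: "clampc za zb xa xb y = max (min za zb) (min (max za zb) y)" by (simp add: clampc_def)
  show ?thesis
  proof (cases "min za zb \<le> y \<and> y \<le> max za zb")
    case True
    hence "clampc za zb xa xb y = y" using cl by simp
    moreover have "incell lam \<lfloor>y / lam\<rfloor> y"
    proof -
      have "lam * of_int \<lfloor>y / lam\<rfloor> \<le> lam * (y / lam)"
        using mult_left_mono[OF of_int_floor_le[of "y/lam"], of lam] lam by simp
      moreover have "lam * (y / lam) \<le> lam * (of_int \<lfloor>y / lam\<rfloor> + 1)"
        using mult_left_mono[of "y/lam" "of_int \<lfloor>y / lam\<rfloor> + 1" lam] lam by linarith
      ultimately show ?thesis using lam unfolding incell_def by simp
    qed
    ultimately show ?thesis by metis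
  next
    case False
    show ?thesis
    proof (cases "y < min za zb")
      case True
      hence cv: "clampc za zb xa xb y = min za zb" using cl by (auto simp: min_def max_def)
      show ?thesis
      proof (cases "xa \<le> xb")
        case True
        hence "xa \<le> y" using y by simp
        hence "incell lam ka y \<and> incell lam ka (min za zb)"
          using c \<open>y < min za zb\<close> by (auto simp: incell_def)
        thus ?thesis using cv by metis
      next
        case False
        hence "xb \<le> y" using y by simp
        hence "incell lam kb y \<and> incell lam kb (min za zb)"
          using c \<open>y < min za zb\<close> by (auto simp: incell_def)
        thus ?thesis using cv by metis
      qed
    next
      case False
      hence yg: "max za zb < y" using \<open>\<not> (min za zb \<le> y \<and> y \<le> max za zb)\<close> by linarith
      hence cv: "clampc za zb xa xb y = max za zb" using cl by (auto simp: min_def max_def)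
      show ?thesis
      proof (cases "xa \<le> xb")
        case True
        hence "y \<le> xb" using y by simp
        hence "incell lam kb y \<and> incell lam kb (max za zb)"
          using c yg by (auto simp: incell_def)
        thus ?thesis using cv by metis
      next
        case False
        hence "y \<le> xa" using y by simp
        hence "incell lam ka y \<and> incell lam ka (max za zb)"
          using c yg by (auto simp: incell_def)
        thus ?thesis using cv by metis
      qed
    qed
  qed
qed

lemma clampc_end1:
  assumes lam: "lam > 0" and c: "incell lam ka xa" "incell lam ka za"
  shows "incell lam ka (clampc za zb xa xb xa)"
  using c unfolding clampc_def incell_def by auto

lemma clampc_end2:
  assumes lam: "lam > 0" and c: "incell lam ka xa" "incell lam ka za" "incell lam kb xb" "incell lam kb zb"
  shows "incell lam kb (clampc za zb xa xb xb)"
proof (cases "(xb - xa) * (zb - za) < 0")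
  case True
  hence "ka = kb" using inversion_same[OF lam c] by simp
  thus ?thesis using c True by (auto simp: clampc_def)
next
  case False thus ?thesis using c unfolding clampc_def incell_def by auto
qed

lemma clampc_order:
  fixes za zb xa xb :: real
  defines "c1 \<equiv> clampc za zb xa xb xa" and "c2 \<equiv> clampc za zb xa xb xb"
  shows "(za \<le> c1 \<and> c1 \<le> zb \<or> zb \<le> c1 \<and> c1 \<le> za) \<and> (c1 \<le> c2 \<and> c2 \<le> zb \<or> zb \<le> c2 \<and> c2 \<le> c1)"
proof (cases "(xb - xa) * (zb - za) < 0")
  case True thus ?thesis by (auto simp add: c1_def c2_def clampc_def)
next
  case False
  have "(xa \<le> xb \<and> za \<le> zb) \<or> (xb \<le> xa \<and> zb \<le> za) \<or> za = zb \<or> xa = xb"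
  proof (rule ccontr)
    assume "\<not> ?thesis"
    hence "(xa < xb \<and> zb < za) \<or> (xb < xa \<and> za < zb)" by linarith
    hence "(xb - xa) * (zb - za) < 0" by (auto intro: mult_pos_neg mult_neg_pos)
    thus False using False by simp
  qed
  thus ?thesis using False unfolding c1_def c2_def clampc_def by auto
qed

lemma clampc_mono: "u \<le> v \<Longrightarrow> clampc za zb xa xb u \<le> clampc za zb xa xb v"
  unfolding clampc_def by auto

lemma clampc_lip: "\<bar>clampc za zb xa xb u - clampc za zb xa xb v\<bar> \<le> \<bar>u - v\<bar>"
  unfolding clampc_def min_def max_def by (auto simp: abs_le_iff)

lemma geo_mono: "geo S g a b \<Longrightarrow> S \<subseteq> Z \<Longrightarrow> geo Z g a b"
  unfolding geo_def by blast

lemma cube_char: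
  assumes lam: "lam > 0"
  shows "y \<in> scaled_cube lam h \<longleftrightarrow> (\<forall>i. lam * (h$i - 1/2) \<le> y$i \<and> y$i \<le> lam * (h$i + 1/2))"
proof
  assume "y \<in> scaled_cube lam h"
  then obtain q where q: "q \<in> unit_cube" "y = lam *\<^sub>R (h + q)" unfolding scaled_cube_def by auto
  show "\<forall>i. lam * (h$i - 1/2) \<le> y$i \<and> y$i \<le> lam * (h$i + 1/2)"
  proof
    fix i
    have "-1/2 \<le> q$i" "q$i \<le> 1/2" using q(1) unfolding unit_cube_def by auto
    hence "h$i - 1/2 \<le> h$i + q$i" "h$i + q$i \<le> h$i + 1/2" by auto
    thus "lam * (h$i - 1/2) \<le> y$i \<and> y$i \<le> lam * (h$i + 1/2)"
      using q(2) lam by (simp add: mult_left_mono)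
  qed
next
  assume H: "\<forall>i. lam * (h$i - 1/2) \<le> y$i \<and> y$i \<le> lam * (h$i + 1/2)"
  define q where "q = (1/lam) *\<^sub>R y - h"
  have "q \<in> unit_cube" unfolding unit_cube_def
  proof (safe)
    fix i
    have "h$i - 1/2 \<le> y$i / lam" "y$i / lam \<le> h$i + 1/2"
      using H lam by (auto simp: field_simps)
    moreover have "q$i = y$i / lam - h$i" by (simp add: q_def divide_inverse mult.commute)
    ultimately show "-1/2 \<le> q$i" "q$i \<le> 1/2" by linarith+
  qed
  moreover have "y = lam *\<^sub>R (h + q)" using lam by (simp add: q_def)
  ultimately show "y \<in> scaled_cube lam h" unfolding scaled_cube_def by blast
qed

lemma thick_elim:
  assumes lam: "lam > 0" and y: "y \<in> cube_thickening lam X"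
  shows "\<exists>k x. x \<in> X \<and> (\<forall>i. incell lam (k i) (x$i) \<and> incell lam (k i) (y$i))"
proof -
  obtain h where h: "\<forall>i. h $ i \<in> half_integers" "scaled_cube lam h \<inter> X \<noteq> {}" "y \<in> scaled_cube lam h"
    using y unfolding cube_thickening_def by blast
  obtain x where x: "x \<in> X" "x \<in> scaled_cube lam h" using h(2) by blast
  have "\<forall>i. \<exists>m::int. h$i = of_int m + 1/2" using h(1) unfolding half_integers_def by blast
  then obtain k where k: "\<And>i. h$i = of_int (k i) + 1/2" by metis
  have cell: "incell lam (k i) (v$i)" if "v \<in> scaled_cube lam h" for v i
    using that[unfolded cube_char[OF lam], rule_format, of i] k[of i] unfolding incell_def
    by (auto simp: algebra_simps)
  show ?thesis using x cell h(3) by blast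
qed

lemma thick_intro:
  assumes lam: "lam > 0" and x: "x \<in> X" and c: "\<forall>i. incell lam (k i) (x$i) \<and> incell lam (k i) (y$i)"
  shows "y \<in> cube_thickening lam X"
proof -
  define h :: "real^'a" where "h = (\<chi> i. of_int (k i) + 1/2)"
  have inh: "v \<in> scaled_cube lam h" if "\<forall>i. incell lam (k i) (v$i)" for v
    unfolding cube_char[OF lam] using that unfolding incell_def h_def by (auto simp: algebra_simps)
  have "\<forall>i. h $ i \<in> half_integers" unfolding half_integers_def h_def by auto
  moreover have "x \<in> scaled_cube lam h \<inter> X" using inh c x by auto
  moreover have "y \<in> scaled_cube lam h" using inh c by auto
  ultimately show ?thesis unfolding cube_thickening_def by blast
qed

lemma cell_convex: "convex {y::real^'n. \<forall>i. incell lam (k i) (y$i)}"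
  unfolding convex_def
proof (safe)
  fix x y :: "real^'n" and u v :: real and i
  assume x: "\<forall>i. incell lam (k i) (x$i)" and y: "\<forall>i. incell lam (k i) (y$i)"
    and u: "0 \<le> u" and v: "0 \<le> v" and uv: "u + v = 1"
  have a: "lam * of_int (k i) \<le> x$i" "x$i \<le> lam * (of_int (k i) + 1)"
    "lam * of_int (k i) \<le> y$i" "y$i \<le> lam * (of_int (k i) + 1)"
    using x y unfolding incell_def by auto
  have "u * (lam * of_int (k i)) + v * (lam * of_int (k i)) \<le> u * x$i + v * y$i"
    using a u v by (intro add_mono mult_left_mono) auto
  moreover have "u * x$i + v * y$i \<le> u * (lam * (of_int (k i) + 1)) + v * (lam * (of_int (k i) + 1))"
    using a u v by (intro add_mono mult_left_mono) auto
  ultimately show "incell lam (k i) ((u *\<^sub>R x + v *\<^sub>R y) $ i)"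
    unfolding incell_def using uv by (simp add: distrib_right[symmetric])
qed

theorem proposition3p1:
  fixes X :: "(real^'n) set" and lam :: real
  assumes "l1_convex X" and "lam > 0"
  shows "l1_convex (cube_thickening lam X)"
  unfolding l1_convex_geo
proof (intro ballI)
  note lam = \<open>lam > 0\<close>
  let ?Y = "cube_thickening lam X"
  fix z z' assume z: "z \<in> ?Y" and z': "z' \<in> ?Y"
  obtain k x where kx: "x \<in> X" "\<forall>i. incell lam (k i) (x$i) \<and> incell lam (k i) (z$i)"
    using thick_elim[OF lam z] by blast
  obtain k' x' where kx': "x' \<in> X" "\<forall>i. incell lam (k' i) (x'$i) \<and> incell lam (k' i) (z'$i)"
    using thick_elim[OF lam z'] by blast
  obtain \<gamma> where \<gamma>: "geo X \<gamma> x x'" using assms(1) kx(1) kx'(1) unfolding l1_convex_geo by blast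
  define D where "D = l1dist x x'"
  have D0: "0 \<le> D" using l1dist_nonneg D_def by simp
  have G: "\<gamma> 0 = x" "\<gamma> D = x'" "\<And>t. t\<in>{0..D} \<Longrightarrow> \<gamma> t \<in> X"
    "\<And>t t'. t\<in>{0..D} \<Longrightarrow> t'\<in>{0..D} \<Longrightarrow> l1dist (\<gamma> t) (\<gamma> t') = \<bar>t - t'\<bar>"
    using \<gamma> unfolding geo_def D_def by auto
  define F where "F y = (\<chi> i. clampc (z$i) (z'$i) (x$i) (x'$i) (y$i))" for y :: "real^'n"
  define p where "p t = F (\<gamma> t)" for t
  define w where "w = F x"
  define w' where "w' = F x'"
  define C where "C = {y::real^'n. \<forall>i. incell lam (k i) (y$i)}"
  define C' where "C' = {y::real^'n. \<forall>i. incell lam (k' i) (y$i)}"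
  have CY: "C \<subseteq> ?Y" unfolding C_def using thick_intro[OF lam kx(1)] kx(2) by blast
  have CY': "C' \<subseteq> ?Y" unfolding C'_def using thick_intro[OF lam kx'(1)] kx'(2) by blast
  have zC: "z \<in> C" and wC: "w \<in> C" unfolding C_def w_def F_def
    using kx(2) clampc_end1[OF lam] by auto
  have zC': "z' \<in> C'" unfolding C'_def using kx'(2) by auto
  have wC': "w' \<in> C'" unfolding C'_def w'_def F_def
  proof (simp, intro allI)
    fix i show "incell lam (k' i) (clampc (z$i) (z'$i) (x$i) (x'$i) (x'$i))"
      using kx(2) kx'(2) clampc_end2[OF lam, of "k i" "x$i" "z$i" "k' i" "x'$i" "z'$i"] by blast
  qed
  obtain g1 where g1: "geo ?Y g1 z w"
    using geo_segment[OF cell_convex zC[unfolded C_def] wC[unfolded C_def]] geo_mono CY C_def by blast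
  obtain g3 where g3: "geo ?Y g3 w' z'"
    using geo_segment[OF cell_convex wC'[unfolded C'_def] zC'[unfolded C'_def]] geo_mono CY' C'_def by blast
  have btwx: "btw x (\<gamma> t) x'" if "t \<in> {0..D}" for t
    using geo_btw[OF \<gamma>, of 0 t] that G(1) D_def by auto
  have btwt: "btw (\<gamma> t) (\<gamma> t') x'" if "0 \<le> t" "t \<le> t'" "t' \<le> D" for t t'
    using geo_btw[OF \<gamma>, of t t'] that D_def by auto
  have "\<exists>g. geo ?Y g (p 0) (p D)"
  proof (rule geo_reparam[OF D0])
    show "\<forall>t\<in>{0..D}. p t \<in> ?Y"
    proof
      fix t assume t: "t \<in> {0..D}"
      have "\<forall>i. \<exists>m. incell lam m (\<gamma> t $ i) \<and> incell lam m (p t $ i)"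
      proof
        fix i
        have "min (x$i) (x'$i) \<le> \<gamma> t $ i" "\<gamma> t $ i \<le> max (x$i) (x'$i)"
          using btwx[OF t] unfolding btw_def by (auto dest: spec[of _ i])
        thus "\<exists>m. incell lam m (\<gamma> t $ i) \<and> incell lam m (p t $ i)"
          using clampc_cell[OF lam, of "k i" "x$i" "z$i" "k' i" "x'$i" "z'$i" "\<gamma> t $ i"] kx(2) kx'(2)
          by (simp add: p_def F_def)
      qed
      then obtain m where "\<forall>i. incell lam (m i) (\<gamma> t $ i) \<and> incell lam (m i) (p t $ i)" by metis
      thus "p t \<in> ?Y" using thick_intro[OF lam G(3)[OF t]] by blast
    qed
    show "\<forall>t\<in>{0..D}. \<forall>t'\<in>{0..D}. l1dist (p t) (p t') \<le> \<bar>t - t'\<bar>"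
    proof (intro ballI)
      fix t t' assume t: "t \<in> {0..D}" and t': "t' \<in> {0..D}"
      have "l1dist (p t) (p t') \<le> l1dist (\<gamma> t) (\<gamma> t')"
        unfolding l1dist_def p_def F_def by (intro sum_mono) (simp add: clampc_lip)
      thus "l1dist (p t) (p t') \<le> \<bar>t - t'\<bar>" using G(4)[OF t t'] by simp
    qed
    show "\<forall>i. (\<forall>t t'. 0 \<le> t \<longrightarrow> t \<le> t' \<longrightarrow> t' \<le> D \<longrightarrow> p t $ i \<le> p t' $ i) \<or>
              (\<forall>t t'. 0 \<le> t \<longrightarrow> t \<le> t' \<longrightarrow> t' \<le> D \<longrightarrow> p t' $ i \<le> p t $ i)"
    proof
      fix i
      show "(\<forall>t t'. 0 \<le> t \<longrightarrow> t \<le> t' \<longrightarrow> t' \<le> D \<longrightarrow> p t $ i \<le> p t' $ i) \<or>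
              (\<forall>t t'. 0 \<le> t \<longrightarrow> t \<le> t' \<longrightarrow> t' \<le> D \<longrightarrow> p t' $ i \<le> p t $ i)"
      proof (cases "x$i \<le> x'$i")
        case True
        have "\<gamma> t $ i \<le> \<gamma> t' $ i" if "0 \<le> t" "t \<le> t'" "t' \<le> D" for t t'
        proof -
          have "\<gamma> t $ i \<le> x'$i" using btwx[of t] that True unfolding btw_def
            by (auto dest: spec[of _ i])
          thus ?thesis using btwt[OF that] unfolding btw_def by (auto dest: spec[of _ i])
        qed
        thus ?thesis by (auto simp: p_def F_def intro!: clampc_mono)
      next
        case False
        have "\<gamma> t' $ i \<le> \<gamma> t $ i" if "0 \<le> t" "t \<le> t'" "t' \<le> D" for t t'
        proof -
          have "x'$i \<le> \<gamma> t $ i" using btwx[of t] that False unfolding btw_def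
            by (auto dest: spec[of _ i])
          thus ?thesis using btwt[OF that] unfolding btw_def by (auto dest: spec[of _ i])
        qed
        thus ?thesis by (auto simp: p_def F_def intro!: clampc_mono)
      qed
    qed
  qed
  then obtain g2 where g2: "geo ?Y g2 w w'" using G(1,2) by (auto simp: p_def w_def w'_def)
  have ord: "btw z w z'" "btw w w' z'"
    unfolding btw_def w_def w'_def F_def using clampc_order by auto
  obtain g23 where "geo ?Y g23 w z'" using geo_concat[OF g2 g3 ord(2)] by blast
  thus "\<exists>g. geo ?Y g z z'" using geo_concat[OF g1 _ ord(1)] by blast
qed

end
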